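(* Let $\ell\geq 1$ be an integer. There is a constant $\sigma_\ell$ depending only on $\ell$ such that for every integer $s\geq 0$ and every $\mathbf{a}=(a_0,\ldots,a_\ell)\in\mathbb{R}^{\ell+1}$ the matrix $A_{s,\mathbf{a}}\in M_{\ell+1}(\mathbb{R})$ with entries \[ (A_{s,\mathbf{a}})_{ij}=\big((i-1)(\ell+1)+j\big)^{\ell-1}\quad (1\leq i\leq \ell,\ 1\leq j\leq \ell+1),\qquad (A_{s,\mathbf{a}})_{\ell+1,j}=(j-1)^s a_{j-1}\quad (1\leq j\leq \ell+1) \] satisfies \[ \det(A_{s,\mathbf{a}})=\sigma_\ell\sum_{j=0}^{\ell}(-1)^j\binom{\ell}{j} j^s a_j . \]
   Context: The convention $0^0=1$ is used. *)

theory Defs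
  imports "Jordan_Normal_Form.Determinant"
begin

text \<open>The (l+1)x(l+1) matrix A_{s,a}, indices shifted to 0-based:
  row i < l (paper row i+1), column j (paper column j+1):
  entry (i*(l+1) + j + 1)^(l-1); last row i = l: j^s * a j (with 0^0 = 1).\<close>
definition A_mat :: "nat \<Rightarrow> nat \<Rightarrow> (nat \<Rightarrow> real) \<Rightarrow> real mat" where
  "A_mat l s a = mat (l+1) (l+1)
     (\<lambda>(i,j). if i < l then real ((i*(l+1) + j + 1) ^ (l-1)) else real j ^ s * a j)"

end

theory Submission
  imports Defs
begin

lemma h1: "x * y = z * w \<Longrightarrow> (-1::real)^(Suc i) * x * y * P = - z * ((-1)^i * w * P)"
proof -
  assume e: "x * y = z * w"
  have "(-1::real)^(Suc i) * x * y * P = - ((-1)^i * (x * y) * P)" by (simp add: mult_ac)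
  also have "\<dots> = - z * ((-1)^i * w * P)" using e by (simp add: mult_ac)
  finally show ?thesis .
qed

lemma alt_sum:
  "k < n \<Longrightarrow> (\<Sum>j\<le>n. (-1)^j * real (n choose j) * (c + real j)^k) = 0"
proof (induction k arbitrary: n c)
  case 0
  then show ?case using choose_alternating_sum[of n, where 'a=real] by simp
next
  case (Suc k)
  then obtain m where n: "n = Suc m" and km: "k < m" by (cases n) auto
  have split: "(\<Sum>j\<le>n. (-1)^j * real (n choose j) * (c + real j)^Suc k)
     = c * (\<Sum>j\<le>n. (-1)^j * real (n choose j) * (c + real j)^k)
       + (\<Sum>j\<le>n. (-1)^j * real (n choose j) * real j * (c + real j)^k)"
    by (simp add: sum_distrib_left sum.distrib[symmetric] algebra_simps)
  have "(\<Sum>j\<le>n. (-1)^j * real (n choose j) * real j * (c + real j)^k)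
      = (\<Sum>i\<le>m. (-1)^(Suc i) * real (Suc m choose Suc i) * real (Suc i) * (c + real (Suc i))^k)"
    unfolding n by (subst sum.atMost_Suc_shift) simp
  also have "\<dots> = - real (Suc m) * (\<Sum>i\<le>m. (-1)^i * real (m choose i) * ((c+1) + real i)^k)"
    unfolding sum_distrib_left
  proof (rule sum.cong[OF refl])
    fix i assume "i \<in> {..m}"
    have b: "real (Suc m choose Suc i) * real (Suc i) = real (Suc m) * real (m choose i)"
    proof -
      have "real (Suc i * (Suc m choose Suc i)) = real (Suc m * (m choose i))"
        using arg_cong[OF Suc_times_binomial[of i m], of real] by blast
      then show ?thesis by (simp only: of_nat_mult mult.commute)
    qed
    have p: "(c + real (Suc i))^k = ((c+1) + real i)^k" by (simp only: of_nat_Suc add.assoc add.commute[of 1])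
    show "(-1)^(Suc i) * real (Suc m choose Suc i) * real (Suc i) * (c + real (Suc i))^k
      = - real (Suc m) * ((-1)^i * real (m choose i) * ((c+1) + real i)^k)"
      unfolding p by (rule h1[OF b])
  qed
  also have "\<dots> = 0" using Suc.IH[OF km] by simp
  finally show ?case using split Suc.IH[of n c] Suc.prems by simp
qed

definition Mm :: "nat \<Rightarrow> real mat" where
  "Mm l = mat (l+1) (l+1) (\<lambda>(i,j). if j < l then (if i = j then 1 else 0) else (-1)^(l+i) * real (l choose i))"

definition Dm :: "nat \<Rightarrow> real mat" where
  "Dm l = mat l l (\<lambda>(i,j). real ((i*(l+1) + j + 1) ^ (l-1)))"

lemma A_carrier: "A_mat l s a \<in> carrier_mat (l+1) (l+1)"
  unfolding A_mat_def by simp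

lemma A_idx: "i < l+1 \<Longrightarrow> j < l+1 \<Longrightarrow> A_mat l s a $$ (i,j) =
   (if i < l then real ((i*(l+1) + j + 1) ^ (l-1)) else real j ^ s * a j)"
  unfolding A_mat_def by simp

lemma M_carrier: "Mm l \<in> carrier_mat (l+1) (l+1)"
  unfolding Mm_def by simp

lemma M_idx: "i < l+1 \<Longrightarrow> j < l+1 \<Longrightarrow> Mm l $$ (i,j) =
   (if j < l then (if i = j then 1 else 0) else (-1)^(l+i) * real (l choose i))"
  unfolding Mm_def by simp

lemma det_M: "det (Mm l) = 1"
proof -
  have ut: "upper_triangular (Mm l)"
    by (rule upper_triangularI) (simp add: M_idx Mm_def)
  have "det (Mm l) = prod_list (diag_mat (Mm l))"
    by (rule det_upper_triangular[OF ut M_carrier])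
  also have "\<dots> = (\<Prod>i = 0..<l+1. Mm l $$ (i,i))"
    by (simp add: prod_list_diag_prod Mm_def)
  also have "\<dots> = (\<Prod>i = 0..<l+1. 1)"
  proof (rule prod.cong[OF refl])
    fix i assume "i \<in> {0..<l+1}"
    then have "i < l \<or> i = l" by auto
    then show "Mm l $$ (i,i) = 1"
    proof
      assume "i = l" then show ?thesis by (simp add: M_idx power_mult flip: mult_2)
    qed (simp add: M_idx)
  qed
  finally show ?thesis by simp
qed

lemma AM_idx: "i < l+1 \<Longrightarrow> j < l+1 \<Longrightarrow> (A_mat l s a * Mm l) $$ (i,j) =
   (\<Sum>k\<in>{0..<l+1}. A_mat l s a $$ (i,k) * Mm l $$ (k,j))"
  using A_carrier[of l s a] M_carrier[of l] by (simp add: scalar_prod_def)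

lemma AM_left: "i < l+1 \<Longrightarrow> j < l \<Longrightarrow> (A_mat l s a * Mm l) $$ (i,j) = A_mat l s a $$ (i,j)"
proof -
  assume i: "i < l+1" and j: "j < l"
  have "(A_mat l s a * Mm l) $$ (i,j) = (\<Sum>k\<in>{0..<l+1}. A_mat l s a $$ (i,k) * Mm l $$ (k,j))"
    using i j by (simp add: AM_idx)
  also have "\<dots> = (\<Sum>k\<in>{0..<l+1}. if k = j then A_mat l s a $$ (i,k) else 0)"
    by (rule sum.cong[OF refl]) (use j in \<open>auto simp: M_idx\<close>)
  also have "\<dots> = A_mat l s a $$ (i,j)" using j by simp
  finally show ?thesis .
qed

lemma AM_last: "i < l+1 \<Longrightarrow> (A_mat l s a * Mm l) $$ (i,l) =
   (-1)^l * (\<Sum>k\<le>l. (-1)^k * real (l choose k) * A_mat l s a $$ (i,k))"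
proof -
  assume i: "i < l+1"
  have "(A_mat l s a * Mm l) $$ (i,l) = (\<Sum>k\<in>{0..<l+1}. A_mat l s a $$ (i,k) * Mm l $$ (k,l))"
    using i by (simp add: AM_idx)
  also have "\<dots> = (\<Sum>k\<le>l. (-1)^l * ((-1)^k * real (l choose k) * A_mat l s a $$ (i,k)))"
    by (rule sum.cong) (auto simp: M_idx power_add)
  finally show ?thesis by (simp add: sum_distrib_left)
qed

lemma det_A: "det (A_mat l s a) = ((-1)^l * det (Dm l)) *
   (\<Sum>j=0..l. (-1)^j * real (l choose j) * real j ^ s * a j)"
proof -
  let ?A = "A_mat l s a" and ?B = "A_mat l s a * Mm l"
  let ?S = "\<Sum>j=0..l. (-1)^j * real (l choose j) * real j ^ s * a j"
  have B: "?B \<in> carrier_mat (l+1) (l+1)" by (rule mult_carrier_mat[OF A_carrier M_carrier])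
  have "det ?B = det ?A * det (Mm l)" by (rule det_mult[OF A_carrier M_carrier])
  then have dAB: "det ?A = det ?B" by (simp add: det_M)
  have zero: "?B $$ (i,l) = 0" if i: "i < l" for i
  proof -
    have "?B $$ (i,l) = (-1)^l * (\<Sum>k\<le>l. (-1)^k * real (l choose k) * (real (i*(l+1)+1) + real k)^(l-1))"
      using i by (simp add: AM_last A_idx add.assoc)
    also have "\<dots> = 0" using alt_sum[of "l-1" l] i by simp
    finally show ?thesis .
  qed
  have last: "?B $$ (l,l) = (-1)^l * ?S"
    by (simp add: AM_last A_idx atLeast0AtMost mult.assoc)
  have "det ?B = (\<Sum>i<l+1. ?B $$ (i,l) * cofactor ?B i l)"
    by (rule laplace_expansion_column[OF B]) simp
  also have "\<dots> = ?B $$ (l,l) * cofactor ?B l l"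
    using zero by simp
  also have "cofactor ?B l l = det (mat_delete ?B l l)"
    by (simp add: cofactor_def power_mult flip: mult_2)
  also have "mat_delete ?B l l = Dm l"
  proof (rule eq_matI)
    fix i j assume i: "i < dim_row (Dm l)" and j: "j < dim_col (Dm l)"
    then have il: "i < l" and jl: "j < l" by (auto simp: Dm_def)
    have "mat_delete ?B l l $$ (i,j) = ?B $$ (i,j)"
      using il jl A_carrier[of l s a] M_carrier[of l] by (simp add: mat_delete_def)
    also have "\<dots> = ?A $$ (i,j)" using il jl by (simp add: AM_left)
    also have "\<dots> = Dm l $$ (i,j)" using il jl by (simp add: A_idx Dm_def)
    finally show "mat_delete ?B l l $$ (i,j) = Dm l $$ (i,j)" .
  qed (use B in \<open>auto simp: Dm_def\<close>)
  finally show ?thesis using dAB last by simp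
qed

theorem proposition1:
  fixes l :: nat
  assumes "l \<ge> 1"
  shows "\<exists>\<sigma>::real. \<forall>(s::nat) (a::nat \<Rightarrow> real).
           det (A_mat l s a) = \<sigma> * (\<Sum>j=0..l. (-1)^j * real (l choose j) * real j ^ s * a j)"
  using det_A by blast

end
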